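(* Let $\boldsymbol{x}\sim p(\boldsymbol{x})$ on $\mathbb{R}^d$ and $y\in\{0,1\}$ with $\mathbb{P}(y=1\mid\boldsymbol{x})=\sigma(\boldsymbol{x}^\top\boldsymbol{\theta}_{\mathrm{true}})$, where $\sigma(t)=1/(1+e^{-t})$, and assume $0<\mathbb{P}(y=1)<1$. Let $\mathcal{P}_0,\mathcal{P}_1$ be the conditional distributions of $\boldsymbol{x}$ given $y=0$ and $y=1$, and use the logistic loss $\ell(\boldsymbol{\theta};\boldsymbol{x},y)=\log(1+\exp\{\boldsymbol{\theta}^\top\boldsymbol{x}\})-y\,\boldsymbol{x}^\top\boldsymbol{\theta}$. Let $\boldsymbol{\theta}^*$ be the unique minimizer of the balanced risk $\mathcal{R}(\boldsymbol{\theta})=\frac12\mathbb{E}_{\mathcal{P}_0}\ell(\boldsymbol{\theta};\boldsymbol{x},0)+\frac12\mathbb{E}_{\mathcal{P}_1}\ell(\boldsymbol{\theta};\boldsymbol{x},1)$, and let $\phi(\boldsymbol{\theta})=\mathbb{E}_{\mathcal{P}_0}\ell(\boldsymbol{\theta};\boldsymbol{x},0)-\mathbb{E}_{\mathcal{P}_1}\ell(\boldsymbol{\theta};\boldsymbol{x},1)$. If \[ \mathbb{E}_{p(\boldsymbol{x})}\big[\boldsymbol{x}\,\sigma(\boldsymbol{\theta}_{\mathrm{true}}^\top\boldsymbol{x})\big(1-\sigma(\boldsymbol{\theta}_{\mathrm{true}}^\top\boldsymbol{x})\big)\big]=\mathbf{0}, \] then $\nabla\phi(\boldsymbol{\theta}^*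 )=\mathbf{0}$.
   Context: Gradients are with respect to $\boldsymbol{\theta}\in\mathbb{R}^d$. The model has no intercept. *)

theory Defs
  imports "HOL-Probability.Probability"
begin

definition sigmoid :: "real \<Rightarrow> real" where
  "sigmoid t = 1 / (1 + exp (- t))"

definition logloss :: "'a::euclidean_space \<Rightarrow> 'a \<Rightarrow> real \<Rightarrow> real" where
  "logloss \<theta> x y = ln (1 + exp (\<theta> \<bullet> x)) - y * (x \<bullet> \<theta>)"

definition prob_pos :: "'a::euclidean_space measure \<Rightarrow> 'a \<Rightarrow> real" where
  "prob_pos M \<theta>t = (\<integral>x. sigmoid (x \<bullet> \<theta>t) \<partial>M)"

text \<open>Conditional distribution of x given y (Bayes): density P(y|x)/P(y) w.r.t. p.\<close>
definition cond_dist :: "'a::euclidean_space measure \<Rightarrow> 'a \<Rightarrow> real \<Rightarrow> 'a measure" where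
  "cond_dist M \<theta>t y = density M (\<lambda>x. ennreal
      (if y = 1 then sigmoid (x \<bullet> \<theta>t) / prob_pos M \<theta>t
       else (1 - sigmoid (x \<bullet> \<theta>t)) / (1 - prob_pos M \<theta>t)))"

definition balanced_risk :: "'a::euclidean_space measure \<Rightarrow> 'a \<Rightarrow> 'a \<Rightarrow> real" where
  "balanced_risk M \<theta>t \<theta> =
     1/2 * (\<integral>x. logloss \<theta> x 0 \<partial>cond_dist M \<theta>t 0)
   + 1/2 * (\<integral>x. logloss \<theta> x 1 \<partial>cond_dist M \<theta>t 1)"

definition phi :: "'a::euclidean_space measure \<Rightarrow> 'a \<Rightarrow> 'a \<Rightarrow> real" where
  "phi M \<theta>t \<theta> =
     (\<integral>x. logloss \<theta> x 0 \<partial>cond_dist M \<theta>t 0)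
   - (\<integral>x. logloss \<theta> x 1 \<partial>cond_dist M \<theta>t 1)"

end

theory Submission
  imports Defs
begin

lemma sigmoid_alt: "sigmoid a = exp a / (1 + exp a)"
  unfolding sigmoid_def by (simp add: exp_minus field_simps)

lemma sigmoid_pos: "0 < sigmoid a"
  unfolding sigmoid_alt by (simp add: add_pos_pos)

lemma sigmoid_lt1: "sigmoid a < 1"
proof -
  have "0 < 1 + exp a" by (simp add: add_pos_pos)
  then show ?thesis unfolding sigmoid_alt by simp
qed

lemma lse_tangent: "ln (1 + exp (a::real)) + sigmoid a * (b - a) \<le> ln (1 + exp b)"

proof -
  define p where "p = sigmoid a"
  have p0: "0 \<le> p" "p \<le> 1" using sigmoid_pos[of a] sigmoid_lt1[of a] p_def by auto
  have "exp (p * (b - a)) = exp ((1 - p) * 0 + p * (b - a))" by simp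
  also have "\<dots> \<le> (1 - p) * exp 0 + p * exp (b - a)"
    using convex_onD[OF exp_convex, of p 0 "b - a"] p0 by simp
  also have "\<dots> = (1 + exp b) / (1 + exp a)"
  proof -
    have "0 < 1 + exp a" by (simp add: add_pos_pos)
    then show ?thesis unfolding p_def sigmoid_alt by (simp add: field_simps exp_diff)
  qed
  finally have "p * (b - a) \<le> ln ((1 + exp b) / (1 + exp a))"
    by (simp add: ln_ge_iff add_pos_pos)
  also have "\<dots> = ln (1 + exp b) - ln (1 + exp a)"
  proof -
    have h: "\<And>x::real. 1 + exp x \<noteq> 0" by (smt (verit) exp_gt_zero)
    show ?thesis using ln_div[of "1 + exp b" "1 + exp a"] h[of a] h[of b] by simp
  qed
  finally show ?thesis unfolding p_def by simp
qed

lemma lse_lip: "\<bar>ln (1 + exp (b::real)) - ln (1 + exp a)\<bar> \<le> \<bar>b - a\<bar>"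
proof -
  have "ln (1 + exp a) + sigmoid a * (b - a) \<le> ln (1 + exp b)" by (rule lse_tangent)
  moreover have "ln (1 + exp b) + sigmoid b * (a - b) \<le> ln (1 + exp a)" by (rule lse_tangent)
  moreover have "\<bar>sigmoid a * (b - a)\<bar> \<le> \<bar>b - a\<bar>" "\<bar>sigmoid b * (a - b)\<bar> \<le> \<bar>b - a\<bar>"
    using sigmoid_pos[of a] sigmoid_lt1[of a] sigmoid_pos[of b] sigmoid_lt1[of b]
    by (auto simp: abs_mult abs_minus_commute intro!: mult_left_le_one_le)
  ultimately show ?thesis by linarith
qed

lemma lse_bound: "\<bar>ln (1 + exp (b::real))\<bar> \<le> 1 + \<bar>b\<bar>"
proof -
  have "0 \<le> ln (1 + exp b)" by simp
  moreover have "ln (1 + exp b) - ln 2 \<le> \<bar>b\<bar>" using lse_lip[of b 0] by simp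
  ultimately show ?thesis using ln_2_less_1 by simp
qed

lemma lse_deriv: "((\<lambda>t::real. ln (1 + exp t)) has_real_derivative sigmoid t) (at t)"
  by (rule derivative_eq_intros refl | simp add: sigmoid_alt add_pos_pos)+


lemma alg_id: "(p::real) \<noteq> 0 \<Longrightarrow> q \<noteq> 0 \<Longrightarrow>
  ((1 - s) / q - s / p) * (D - s * t) = (1 - s) / q * D - s / p * (D - t) - (1 / q + 1 / p) * (s * (1 - s) * t)"
  by (simp add: field_simps) (simp add: algebra_simps)?

context
  fixes M :: "'a::euclidean_space measure" and \<theta>t :: 'a
  assumes P: "prob_space M"
    and S: "sets M = sets borel"
    and I: "integrable M (\<lambda>x. norm x)"
    and p0: "0 < prob_pos M \<theta>t" and p1: "prob_pos M \<theta>t < 1"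
begin

lemma measM: assumes "f \<in> borel_measurable borel" shows "f \<in> borel_measurable M"
  using assms measurable_cong_sets[OF S refl] by blast

lemma meas_sig[measurable]: "(\<lambda>x. sigmoid (x \<bullet> \<theta>)) \<in> borel_measurable M"
  by (rule measM) (unfold sigmoid_def, measurable)

lemma meas_lse[measurable]: "(\<lambda>x. ln (1 + exp (\<theta> \<bullet> x))) \<in> borel_measurable M"
  by (rule measM) measurable

lemma meas_inner[measurable]: "(\<lambda>x. x \<bullet> \<theta>) \<in> borel_measurable M" "(\<lambda>x. \<theta> \<bullet> x) \<in> borel_measurable M"
   "(\<lambda>x. x) \<in> borel_measurable M"
  by (rule measM, measurable)+

abbreviation "pp \<equiv> prob_pos M \<theta>t"
definition "w0 x = (1 - sigmoid (x \<bullet> \<theta>t)) / (1 - pp)"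
definition "w1 x = sigmoid (x \<bullet> \<theta>t) / pp"

lemma meas_w[measurable]: "w0 \<in> borel_measurable M" "w1 \<in> borel_measurable M"
  unfolding w0_def[abs_def] w1_def[abs_def] by measurable

lemma w_nonneg: "0 \<le> w0 x" "0 \<le> w1 x"
  using p0 p1 sigmoid_lt1[of "x \<bullet> \<theta>t"] sigmoid_pos[of "x \<bullet> \<theta>t"]
  unfolding w0_def w1_def by auto

lemma w_le: "w0 x \<le> 1 / (1 - pp)" "w1 x \<le> 1 / pp"
  using p0 p1 sigmoid_lt1[of "x \<bullet> \<theta>t"] sigmoid_pos[of "x \<bullet> \<theta>t"]
  unfolding w0_def w1_def by (auto simp: divide_right_mono)

lemma cd0: "cond_dist M \<theta>t 0 = density M w0"
  unfolding cond_dist_def w0_def by simp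

lemma cd1: "cond_dist M \<theta>t 1 = density M w1"
  unfolding cond_dist_def w1_def by simp

lemma int_cd: "f \<in> borel_measurable M \<Longrightarrow> (\<integral>x. f x \<partial>cond_dist M \<theta>t 0) = (\<integral>x. w0 x * f x \<partial>M)"
  "f \<in> borel_measurable M \<Longrightarrow> (\<integral>x. f x \<partial>cond_dist M \<theta>t 1) = (\<integral>x. w1 x * f x \<partial>M)"
  unfolding cd0 cd1 by (subst integral_density; simp add: w_nonneg)+

lemma int_lin: "integrable M (\<lambda>x. a + b * norm x)"
proof -
  interpret prob_space M by (rule P)
  have "integrable M (\<lambda>x. a)" by simp
  moreover have "integrable M (\<lambda>x. b * norm x)" using I by (rule integrable_mult_right)
  ultimately show ?thesis by (rule Bochner_Integration.integrable_add)
qed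

lemma intA: "integrable M (\<lambda>x. w0 x * ln (1 + exp (\<theta> \<bullet> x)))"
proof (rule Bochner_Integration.integrable_bound[OF int_lin[of "1 / (1 - pp)" "1 / (1 - pp) * norm \<theta>"]])
  show "(\<lambda>x. w0 x * ln (1 + exp (\<theta> \<bullet> x))) \<in> borel_measurable M" by measurable
  show "AE x in M. norm (w0 x * ln (1 + exp (\<theta> \<bullet> x))) \<le> norm (1 / (1 - pp) + 1 / (1 - pp) * norm \<theta> * norm x)"
  proof (intro AE_I2)
    fix x
    have "\<bar>w0 x * ln (1 + exp (\<theta> \<bullet> x))\<bar> \<le> 1 / (1 - pp) * (1 + norm \<theta> * norm x)"
      unfolding abs_mult using p0 p1 w_nonneg[of x] w_le[of x] lse_bound[of "\<theta> \<bullet> x"] Cauchy_Schwarz_ineq2[of \<theta> x]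
      by (intro mult_mono) auto
    then show "norm (w0 x * ln (1 + exp (\<theta> \<bullet> x))) \<le> norm (1 / (1 - pp) + 1 / (1 - pp) * norm \<theta> * norm x)"
      using p0 p1 by (simp add: algebra_simps add_divide_distrib)
  qed
qed

lemma intB: "integrable M (\<lambda>x. w1 x * (ln (1 + exp (\<theta> \<bullet> x)) - x \<bullet> \<theta>))"
proof (rule Bochner_Integration.integrable_bound[OF int_lin[of "1 / pp" "2 / pp * norm \<theta>"]])
  show "(\<lambda>x. w1 x * (ln (1 + exp (\<theta> \<bullet> x)) - x \<bullet> \<theta>)) \<in> borel_measurable M" by measurable
  show "AE x in M. norm (w1 x * (ln (1 + exp (\<theta> \<bullet> x)) - x \<bullet> \<theta>)) \<le> norm (1 / pp + 2 / pp * norm \<theta> * norm x)"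
  proof (intro AE_I2)
    fix x
    have "\<bar>ln (1 + exp (\<theta> \<bullet> x)) - x \<bullet> \<theta>\<bar> \<le> 1 + 2 * (norm \<theta> * norm x)"
    proof -
      have "0 \<le> ln (1 + exp (\<theta> \<bullet> x))" by simp
      moreover have "x \<bullet> \<theta> = \<theta> \<bullet> x" by (rule inner_commute)
      ultimately show ?thesis using lse_bound[of "\<theta> \<bullet> x"] Cauchy_Schwarz_ineq2[of \<theta> x]
        by (smt (verit))
    qed
    then have "\<bar>w1 x * (ln (1 + exp (\<theta> \<bullet> x)) - x \<bullet> \<theta>)\<bar> \<le> 1 / pp * (1 + 2 * (norm \<theta> * norm x))"
      unfolding abs_mult using p0 p1 w_nonneg[of x] w_le[of x] 
      by (intro mult_mono) auto
    then show "norm (w1 x * (ln (1 + exp (\<theta> \<bullet> x)) - x \<bullet> \<theta>)) \<le> norm (1 / pp + 2 / pp * norm \<theta> * norm x)"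
      using p0 by (simp add: algebra_simps)
  qed
qed

lemma intC: "integrable M (\<lambda>x. (sigmoid (x \<bullet> \<theta>t) * (1 - sigmoid (x \<bullet> \<theta>t))) *\<^sub>R x)"
proof (rule Bochner_Integration.integrable_bound[OF I])
  show "(\<lambda>x. (sigmoid (x \<bullet> \<theta>t) * (1 - sigmoid (x \<bullet> \<theta>t))) *\<^sub>R x) \<in> borel_measurable M" by measurable
  show "AE x in M. norm ((sigmoid (x \<bullet> \<theta>t) * (1 - sigmoid (x \<bullet> \<theta>t))) *\<^sub>R x) \<le> norm (norm x)"
  proof (intro AE_I2)
    fix x
    have "\<bar>sigmoid (x \<bullet> \<theta>t) * (1 - sigmoid (x \<bullet> \<theta>t))\<bar> \<le> 1"
      using sigmoid_pos[of "x \<bullet> \<theta>t"] sigmoid_lt1[of "x \<bullet> \<theta>t"] by (simp add: abs_mult mult_le_one)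
    then show "norm ((sigmoid (x \<bullet> \<theta>t) * (1 - sigmoid (x \<bullet> \<theta>t))) *\<^sub>R x) \<le> norm (norm x)"
      by (simp add: mult_left_le_one_le)
  qed
qed

lemma meas_loss[measurable]: "(\<lambda>x. logloss \<theta> x y) \<in> borel_measurable M"
  unfolding logloss_def by measurable

lemma int_loss: "(\<integral>x. logloss \<theta> x 0 \<partial>cond_dist M \<theta>t 0) = (\<integral>x. w0 x * ln (1 + exp (\<theta> \<bullet> x)) \<partial>M)"
  "(\<integral>x. logloss \<theta> x 1 \<partial>cond_dist M \<theta>t 1) = (\<integral>x. w1 x * (ln (1 + exp (\<theta> \<bullet> x)) - x \<bullet> \<theta>) \<partial>M)"
  by (subst int_cd, measurable, simp add: logloss_def)+

lemma phi_eq: "phi M \<theta>t \<theta> = (\<integral>x. w0 x * ln (1 + exp (\<theta> \<bullet> x)) \<partial>M) - (\<integral>x. w1 x * (ln (1 + exp (\<theta> \<bullet> x)) - x \<bullet> \<theta>) \<partial>M)"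
  unfolding phi_def int_loss ..

lemma R_eq: "balanced_risk M \<theta>t \<theta> = 1/2 * (\<integral>x. w0 x * ln (1 + exp (\<theta> \<bullet> x)) + w1 x * (ln (1 + exp (\<theta> \<bullet> x)) - x \<bullet> \<theta>) \<partial>M)"
  unfolding balanced_risk_def int_loss Bochner_Integration.integral_add[OF intA intB] by (simp add: algebra_simps)

abbreviation "qq x \<equiv> sigmoid (x \<bullet> \<theta>t) * (1 - sigmoid (x \<bullet> \<theta>t))"

lemma intQ: "integrable M (\<lambda>x. qq x * (h \<bullet> x))"
proof -
  have "integrable M (\<lambda>x. h \<bullet> (qq x *\<^sub>R x))"
    using intC by (intro integrable_bounded_linear[OF bounded_linear_inner_right])
  then show ?thesis by simp
qed

lemma zeroQ: assumes A8: "(\<integral>x. qq x *\<^sub>R x \<partial>M) = 0"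
  shows "(\<integral>x. qq x * (h \<bullet> x) \<partial>M) = 0"
proof -
  have "(\<integral>x. qq x * (h \<bullet> x) \<partial>M) = (\<integral>x. h \<bullet> (qq x *\<^sub>R x) \<partial>M)" by simp
  also have "\<dots> = h \<bullet> (\<integral>x. qq x *\<^sub>R x \<partial>M)" using intC by (rule integral_inner_right)
  finally show ?thesis using A8 by simp
qed

lemma pp_ne: "pp \<noteq> 0" "1 - pp \<noteq> 0" using p0 p1 by auto

lemma min_pt:
  assumes A8: "(\<integral>x. qq x *\<^sub>R x \<partial>M) = 0"
  shows "balanced_risk M \<theta>t \<theta>t \<le> balanced_risk M \<theta>t \<theta>'"
proof -
  define F where "F \<theta> x = w0 x * ln (1 + exp (\<theta> \<bullet> x)) + w1 x * (ln (1 + exp (\<theta> \<bullet> x)) - x \<bullet> \<theta>)" for \<theta> x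
  define c where "c = 1 / (1 - pp) - 1 / pp"
  define d where "d = \<theta>' - \<theta>t"
  have intF: "integrable M (F \<theta>)" for \<theta> unfolding F_def by (rule Bochner_Integration.integrable_add[OF intA intB])
  have "(\<integral>x. F \<theta>t x \<partial>M) = (\<integral>x. F \<theta>t x \<partial>M) + c * (\<integral>x. qq x * (d \<bullet> x) \<partial>M)"
    using zeroQ[OF A8] by simp
  also have "\<dots> = (\<integral>x. F \<theta>t x + c * (qq x * (d \<bullet> x)) \<partial>M)"
    using intF intQ by simp
  also have "\<dots> \<le> (\<integral>x. F \<theta>' x \<partial>M)"
  proof (rule integral_mono)
    show "integrable M (\<lambda>x. F \<theta>t x + c * (qq x * (d \<bullet> x)))" using intF intQ by auto
    show "integrable M (F \<theta>')" by (rule intF)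
    fix x
    define a where "a = \<theta>t \<bullet> x"
    define b where "b = \<theta>' \<bullet> x"
    define sx where "sx = sigmoid (x \<bullet> \<theta>t)"
    have ba: "b - a = d \<bullet> x" unfolding a_def b_def d_def by (simp add: inner_diff_left)
    have sa: "sigmoid a = sx" unfolding a_def sx_def by (simp add: inner_commute)
    have T: "ln (1 + exp b) - ln (1 + exp a) \<ge> sx * (d \<bullet> x)"
      using lse_tangent[of a b] ba sa by simp
    have T0: "w0 x * (ln (1 + exp b) - ln (1 + exp a)) \<ge> w0 x * (sx * (d \<bullet> x))"
      using T w_nonneg by (intro mult_left_mono) auto
    have T1: "w1 x * (ln (1 + exp b) - ln (1 + exp a) - (d \<bullet> x)) \<ge> w1 x * (sx * (d \<bullet> x) - (d \<bullet> x))"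
      using T w_nonneg by (intro mult_left_mono) auto
    have alg: "w0 x * (sx * (d \<bullet> x)) + w1 x * (sx * (d \<bullet> x) - (d \<bullet> x)) = c * (qq x * (d \<bullet> x))"
      unfolding w0_def w1_def c_def sx_def using pp_ne by (simp add: field_simps) (simp add: algebra_simps)?
    have xd: "x \<bullet> \<theta>' - x \<bullet> \<theta>t = d \<bullet> x" unfolding d_def by (simp add: inner_diff_right inner_diff_left inner_commute[of x])
    show "F \<theta>t x + c * (qq x * (d \<bullet> x)) \<le> F \<theta>' x"
      unfolding F_def using T0 T1 alg xd unfolding a_def b_def by (simp add: algebra_simps)
  qed
  finally show ?thesis unfolding R_eq F_def by simp
qed

definition "EE h x = ln (1 + exp (\<theta>t \<bullet> x + h \<bullet> x)) - ln (1 + exp (\<theta>t \<bullet> x)) - sigmoid (x \<bullet> \<theta>t) * (h \<bullet> x)"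


lemma phi_diff:
  assumes A8: "(\<integral>x. qq x *\<^sub>R x \<partial>M) = 0"
  shows "phi M \<theta>t (\<theta>t + h) - phi M \<theta>t \<theta>t = (\<integral>x. (w0 x - w1 x) * EE h x \<partial>M)"
proof -
  define A where "A \<theta> x = w0 x * ln (1 + exp (\<theta> \<bullet> x))" for \<theta> x
  define B where "B \<theta> x = w1 x * (ln (1 + exp (\<theta> \<bullet> x)) - x \<bullet> \<theta>)" for \<theta> x
  define c where "c = 1 / (1 - pp) + 1 / pp"
  have iA: "integrable M (A \<theta>)" for \<theta> unfolding A_def by (rule intA)
  have iB: "integrable M (B \<theta>)" for \<theta> unfolding B_def by (rule intB)
  have iQ: "integrable M (\<lambda>x. c * (qq x * (h \<bullet> x)))" using intQ by (rule integrable_mult_right)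
  have pw: "(w0 x - w1 x) * EE h x = ((A (\<theta>t + h) x - B (\<theta>t + h) x) - (A \<theta>t x - B \<theta>t x)) - c * (qq x * (h \<bullet> x))" for x
  proof -
    have "(w0 x - w1 x) * EE h x = w0 x * (ln (1 + exp (\<theta>t \<bullet> x + h \<bullet> x)) - ln (1 + exp (\<theta>t \<bullet> x)))
       - w1 x * ((ln (1 + exp (\<theta>t \<bullet> x + h \<bullet> x)) - ln (1 + exp (\<theta>t \<bullet> x))) - h \<bullet> x) - c * (qq x * (h \<bullet> x))"
      unfolding EE_def w0_def w1_def c_def using alg_id[OF pp_ne(1) pp_ne(2)] by simp
    also have "\<dots> = ((A (\<theta>t + h) x - B (\<theta>t + h) x) - (A \<theta>t x - B \<theta>t x)) - c * (qq x * (h \<bullet> x))"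
      unfolding A_def B_def by (simp add: inner_add_left inner_add_right inner_commute[of x] algebra_simps)
    finally show ?thesis .
  qed
  have "(\<integral>x. (w0 x - w1 x) * EE h x \<partial>M) = (\<integral>x. ((A (\<theta>t + h) x - B (\<theta>t + h) x) - (A \<theta>t x - B \<theta>t x)) - c * (qq x * (h \<bullet> x)) \<partial>M)"
    unfolding pw ..
  also have "\<dots> = ((\<integral>x. A (\<theta>t + h) x \<partial>M) - (\<integral>x. B (\<theta>t + h) x \<partial>M)) - ((\<integral>x. A \<theta>t x \<partial>M) - (\<integral>x. B \<theta>t x \<partial>M)) - c * (\<integral>x. qq x * (h \<bullet> x) \<partial>M)"
    using iA iB iQ intQ by (simp add: Bochner_Integration.integral_diff Bochner_Integration.integrable_diff)
  also have "\<dots> = phi M \<theta>t (\<theta>t + h) - phi M \<theta>t \<theta>t"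
    unfolding phi_eq A_def B_def zeroQ[OF A8] by simp
  finally show ?thesis by simp
qed

lemma meas_EE[measurable]: "EE h \<in> borel_measurable M"
  unfolding EE_def[abs_def] by measurable

lemma EE_bound: "\<bar>EE h x\<bar> \<le> 2 * (norm h * norm x)"
proof -
  have 1: "\<bar>ln (1 + exp (\<theta>t \<bullet> x + h \<bullet> x)) - ln (1 + exp (\<theta>t \<bullet> x))\<bar> \<le> \<bar>h \<bullet> x\<bar>"
    using lse_lip[of "\<theta>t \<bullet> x + h \<bullet> x" "\<theta>t \<bullet> x"] by simp
  have 2: "\<bar>sigmoid (x \<bullet> \<theta>t) * (h \<bullet> x)\<bar> \<le> \<bar>h \<bullet> x\<bar>"
    using sigmoid_pos[of "x \<bullet> \<theta>t"] sigmoid_lt1[of "x \<bullet> \<theta>t"]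
    by (simp add: abs_mult mult_left_le_one_le)
  have 3: "\<bar>h \<bullet> x\<bar> \<le> norm h * norm x" by (rule Cauchy_Schwarz_ineq2)
  show ?thesis unfolding EE_def using 1 2 3 by linarith
qed

lemma EE_lim:
  assumes X: "X \<longlonglongrightarrow> 0" "\<And>i. X i \<noteq> 0"
  shows "(\<lambda>i. EE (X i) x / norm (X i)) \<longlonglongrightarrow> 0"
proof -
  define f where "f h = \<theta>t \<bullet> x + h \<bullet> x" for h
  have df: "(f has_derivative (\<lambda>h. h \<bullet> x)) (at 0)"
    unfolding f_def by (auto intro!: derivative_eq_intros)
  have dg: "((\<lambda>t. ln (1 + exp t)) has_derivative (*) (sigmoid (x \<bullet> \<theta>t))) (at (f 0))"
    using lse_deriv[of "\<theta>t \<bullet> x"] unfolding f_def by (simp add: has_field_derivative_def inner_commute)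
  have dG: "(((\<lambda>t. ln (1 + exp t)) \<circ> f) has_derivative ((*) (sigmoid (x \<bullet> \<theta>t)) \<circ> (\<lambda>h. h \<bullet> x))) (at 0)"
    by (rule diff_chain_at[OF df dg])
  then have "((\<lambda>h. norm (((\<lambda>t. ln (1 + exp t)) \<circ> f) (0 + h) - ((\<lambda>t. ln (1 + exp t)) \<circ> f) 0
        - ((*) (sigmoid (x \<bullet> \<theta>t)) \<circ> (\<lambda>h. h \<bullet> x)) h) / norm h) \<longlongrightarrow> 0) (at 0)"
    unfolding has_derivative_at by blast
  then have "((\<lambda>h. \<bar>EE h x\<bar> / norm h) \<longlongrightarrow> 0) (at 0)"
    unfolding EE_def f_def by (simp add: o_def)
  then have "((\<lambda>h. \<bar>EE h x\<bar> / norm h) \<circ> X) \<longlonglongrightarrow> 0"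
    using X unfolding tendsto_at_iff_sequentially by auto
  then have "(\<lambda>i. \<bar>EE (X i) x / norm (X i)\<bar>) \<longlonglongrightarrow> 0"
    by (simp add: o_def)
  then show ?thesis by (rule tendsto_rabs_zero_cancel)
qed

lemma deriv0:
  assumes A8: "(\<integral>x. qq x *\<^sub>R x \<partial>M) = 0"
  shows "(phi M \<theta>t has_derivative (\<lambda>h. 0)) (at \<theta>t)"
  unfolding has_derivative_at
proof (intro conjI bounded_linear_zero)
  define K where "K = 1 / (1 - pp) + 1 / pp"
  show "((\<lambda>h. norm (phi M \<theta>t (\<theta>t + h) - phi M \<theta>t \<theta>t - 0) / norm h) \<longlongrightarrow> 0) (at 0)"
    unfolding tendsto_at_iff_sequentially
  proof (intro allI impI)
    fix X :: "nat \<Rightarrow> 'a"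
    assume X0: "\<forall>i. X i \<in> UNIV - {0}" and X: "X \<longlonglongrightarrow> 0"
    then have Xn: "\<And>i. X i \<noteq> 0" by auto
    have conv: "(\<lambda>i. \<integral>x. (w0 x - w1 x) * (EE (X i) x / norm (X i)) \<partial>M) \<longlonglongrightarrow> (\<integral>x. 0 \<partial>M)"
    proof (rule integral_dominated_convergence[where w="\<lambda>x. K * 2 * norm x"])
      show "(\<lambda>x. 0::real) \<in> borel_measurable M" by simp
      show "\<And>i. (\<lambda>x. (w0 x - w1 x) * (EE (X i) x / norm (X i))) \<in> borel_measurable M" by measurable
      show "integrable M (\<lambda>x. K * 2 * norm x)" using I by (rule integrable_mult_right)
      show "AE x in M. (\<lambda>i. (w0 x - w1 x) * (EE (X i) x / norm (X i))) \<longlonglongrightarrow> 0"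
        using EE_lim[OF X Xn] by (intro AE_I2 tendsto_mult_right_zero)
      show "AE x in M. norm ((w0 x - w1 x) * (EE (X i) x / norm (X i))) \<le> K * 2 * norm x" for i
      proof (intro AE_I2)
        fix x
        have a: "\<bar>w0 x - w1 x\<bar> \<le> K" unfolding K_def using w_nonneg[of x] w_le[of x] by linarith
        have b: "\<bar>EE (X i) x / norm (X i)\<bar> \<le> 2 * norm x"
          using EE_bound[of "X i" x] Xn[of i] by (simp add: divide_le_eq algebra_simps)
        show "norm ((w0 x - w1 x) * (EE (X i) x / norm (X i))) \<le> K * 2 * norm x"
        proof -
          have "0 \<le> K" unfolding K_def using p0 p1 by simp
          then show ?thesis unfolding real_norm_def abs_mult using mult_mono[OF a b] by (simp add: mult.assoc)
        qed
      qed
    qed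
    have "(\<lambda>i. \<bar>\<integral>x. (w0 x - w1 x) * (EE (X i) x / norm (X i)) \<partial>M\<bar>) \<longlonglongrightarrow> 0"
      using tendsto_rabs[OF conv] by simp
    moreover have "(\<integral>x. (w0 x - w1 x) * (EE (X i) x / norm (X i)) \<partial>M) = (\<integral>x. (w0 x - w1 x) * EE (X i) x \<partial>M) / norm (X i)" for i
      by (simp only: times_divide_eq_right integral_divide_zero)
    ultimately show "((\<lambda>h. norm (phi M \<theta>t (\<theta>t + h) - phi M \<theta>t \<theta>t - 0) / norm h) \<circ> X) \<longlonglongrightarrow> 0"
      by (simp add: o_def phi_diff[OF A8])
  qed
qed

end

theorem proposition2:
  fixes M :: "'a::euclidean_space measure" and \<theta>t \<theta>s :: 'a
  assumes "prob_space M"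
    and "sets M = sets borel"
    and "integrable M (\<lambda>x. norm x)"
    and "0 < prob_pos M \<theta>t" and "prob_pos M \<theta>t < 1"
    and "\<forall>\<theta>. balanced_risk M \<theta>t \<theta>s \<le> balanced_risk M \<theta>t \<theta>"
    and "\<forall>\<theta>. (\<forall>\<theta>'. balanced_risk M \<theta>t \<theta> \<le> balanced_risk M \<theta>t \<theta>') \<longrightarrow> \<theta> = \<theta>s"
    and "(\<integral>x. (sigmoid (\<theta>t \<bullet> x) * (1 - sigmoid (\<theta>t \<bullet> x))) *\<^sub>R x \<partial>M) = 0"
  shows "(phi M \<theta>t has_derivative (\<lambda>h. 0)) (at \<theta>s)"
proof -
  have A8: "(\<integral>x. (sigmoid (x \<bullet> \<theta>t) * (1 - sigmoid (x \<bullet> \<theta>t))) *\<^sub>R x \<partial>M) = 0"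
    using assms(8) by (simp add: inner_commute)
  have "\<forall>\<theta>'. balanced_risk M \<theta>t \<theta>t \<le> balanced_risk M \<theta>t \<theta>'"
    using min_pt[OF assms(1-5) A8] by blast
  then have "\<theta>t = \<theta>s" using assms(7) by blast
  then show ?thesis using deriv0[OF assms(1-5) A8] by simp
qed

end
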